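(* For $\beta\in S^2$ and $\lambda\ge 0$ let $g_\beta^\lambda:S^2\to S^2$ be defined as below. Let $K,L\subset S^2$ be compact subsets such that $z\neq-\beta$ for all $(\beta,z)\in K\times L$, and let $\varepsilon>0$. Then there exists $\delta\in(0,1)$ such that \[|g_\beta^\lambda(z)-\beta|<\varepsilon\quad\text{for all }(\lambda,\beta,z)\in[0,\delta]\times K\times L.\]
   Context: $S^2$ is the unit sphere in $\mathbb R^3$ and $\langle\cdot,\cdot\rangle$ the Euclidean inner product. For $\beta\in S^2$ let $H_\beta=\{y\in\mathbb R^3:\langle y-\beta,\beta\rangle=0\}$ be the tangent plane at $\beta$, and let $\pi_\beta:H_\beta\cup\{\infty\}\to S^2$ be the stereographic projection $\pi_\beta(y)=\frac{4}{|\beta+y|^2}(\beta+y)-\beta$ for $y\in H_\beta$, $\pi_\beta(\infty)=-\beta$ (a homeomorphism). For $\lambda>0$ let $D_\beta^\lambda(y)=\beta+\lambda(y-\beta)$ on $H_\beta$, $D_\beta^\lambda(\infty)=\infty$, and set $g_\beta^\lambda=\pi_\beta^{-1}\circ D_\beta^\lambda\circ\pi_\beta$ (here $\pi_\beta^{-1}$ denotes the inverse of $\pi_\beta$, so $g_\beta^\lambda:S^2\to S^2$). For $\lambda=0$ set $g_\beta^0(z)=-\beta$ if $z=-\beta$ and $g_\beta^0(z)=\beta$ otherwise. *)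

theory Defs
  imports "HOL-Analysis.Analysis"
begin

type_synonym R3 = "real^3"

definition S2 :: "R3 set" where "S2 = sphere 0 1"

definition tplane :: "R3 \<Rightarrow> R3 set" where
  "tplane \<beta> = {y. inner (y - \<beta>) \<beta> = 0}"

text \<open>One-point compactification of the tangent plane: None stands for infinity.\<close>
definition tplane_ext :: "R3 \<Rightarrow> R3 option set" where
  "tplane_ext \<beta> = Some ` tplane \<beta> \<union> {None}"

definition stereo :: "R3 \<Rightarrow> R3 option \<Rightarrow> R3" where
  "stereo \<beta> p = (case p of None \<Rightarrow> - \<beta>
     | Some y \<Rightarrow> (4 / (norm (\<beta> + y))\<^sup>2) *\<^sub>R (\<beta> + y) - \<beta>)"

definition dil :: "R3 \<Rightarrow> real \<Rightarrow> R3 option \<Rightarrow> R3 option" where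
  "dil \<beta> lam p = (case p of None \<Rightarrow> None | Some y \<Rightarrow> Some (\<beta> + lam *\<^sub>R (y - \<beta>)))"

definition gmap :: "R3 \<Rightarrow> real \<Rightarrow> R3 \<Rightarrow> R3" where
  "gmap \<beta> lam z = (if lam = 0 then (if z = - \<beta> then - \<beta> else \<beta>)
     else stereo \<beta> (dil \<beta> lam (inv_into (tplane_ext \<beta>) (stereo \<beta>) z)))"

end

theory Submission
  imports Defs
begin

lemma S2_norm: "\<beta> \<in> S2 \<Longrightarrow> norm \<beta> = 1" by (simp add: S2_def)
lemma S2_inner: "\<beta> \<in> S2 \<Longrightarrow> inner \<beta> \<beta> = 1"
  by (metis S2_norm norm_eq_sqrt_inner real_sqrt_eq_1_iff)

lemma pos_a:
  assumes "\<beta> \<in> S2" "z \<in> S2" "z \<noteq> - \<beta>"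
  shows "1 + inner z \<beta> > 0"
proof -
  have "norm (z + \<beta>)^2 = 2 * (1 + inner z \<beta>)"
    using S2_inner[OF assms(1)] S2_inner[OF assms(2)]
    by (simp add: power2_norm_eq_inner inner_add_left inner_add_right inner_commute)
  moreover have "z + \<beta> \<noteq> 0" using assms(3) by (metis add.commute add_eq_0_iff2 minus_equation_iff neg_eq_iff_add_eq_0)
  ultimately show ?thesis by (smt (verit) zero_less_norm_iff zero_less_power)
qed

lemma preimage:
  assumes "\<beta> \<in> S2" "z \<in> S2" "z \<noteq> - \<beta>"
  shows "\<exists>y \<in> tplane \<beta>. stereo \<beta> (Some y) = z"
proof -
  define a where "a = 1 + inner z \<beta>"
  have a: "a > 0" using pos_a[OF assms] a_def by simp
  have bb: "inner \<beta> \<beta> = 1" and zz: "inner z z = 1" using S2_inner assms by auto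
  define w where "w = (2/a) *\<^sub>R (z + \<beta>)"
  have "inner w \<beta> = (2/a) * a" unfolding w_def a_def
    by (simp add: inner_add_left bb algebra_simps add_divide_distrib)
  then have wb: "inner w \<beta> = 2" using a by simp
  have ww: "norm w ^2 = 8/a"
  proof -
    have "norm w ^2 = (2/a)^2 * inner (z+\<beta>) (z+\<beta>)"
      unfolding w_def by (simp add: power2_norm_eq_inner power2_eq_square flip: power2_norm_eq_inner)
    also have "inner (z+\<beta>) (z+\<beta>) = 2 * a" unfolding a_def
      using bb zz by (simp add: inner_add_left inner_add_right inner_commute)
    finally show ?thesis using a by (simp add: power2_eq_square field_simps)
  qed
  have "w - \<beta> \<in> tplane \<beta>" unfolding tplane_def using wb bb
    by (simp add: inner_diff_left)
  moreover have "stereo \<beta> (Some (w - \<beta>)) = z"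
  proof -
    have "stereo \<beta> (Some (w - \<beta>)) = (4 / (8/a)) *\<^sub>R w - \<beta>"
      unfolding stereo_def using ww by simp
    also have "\<dots> = z" unfolding w_def using a by (simp add: scaleR_add_right)
    finally show ?thesis .
  qed
  ultimately show ?thesis by blast
qed

lemma inv_pre:
  assumes "\<beta> \<in> S2" "z \<in> S2" "z \<noteq> - \<beta>"
  shows "\<exists>y \<in> tplane \<beta>. stereo \<beta> (Some y) = z \<and> inv_into (tplane_ext \<beta>) (stereo \<beta>) z = Some y"
proof -
  obtain y0 where "y0 \<in> tplane \<beta>" "stereo \<beta> (Some y0) = z" using preimage[OF assms] by blast
  then have zi: "z \<in> stereo \<beta> ` tplane_ext \<beta>" unfolding tplane_ext_def by force
  define p where "p = inv_into (tplane_ext \<beta>) (stereo \<beta>) z"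
  have p1: "p \<in> tplane_ext \<beta>" using zi p_def by (simp add: inv_into_into)
  have p2: "stereo \<beta> p = z" using zi p_def by (simp add: f_inv_into_f)
  have "p \<noteq> None"
  proof
    assume "p = None" then show False using p2 assms(3) by (simp add: stereo_def)
  qed
  then obtain y where "p = Some y" "y \<in> tplane \<beta>" using p1 unfolding tplane_ext_def by auto
  then show ?thesis using p2 p_def by auto
qed

lemma bound_v:
  assumes "\<beta> \<in> S2" "y \<in> tplane \<beta>" "stereo \<beta> (Some y) = z"
  shows "(1 + inner z \<beta>) * norm (y - \<beta>) ^ 2 \<le> 8"
proof -
  have bb: "inner \<beta> \<beta> = 1" using S2_inner assms by auto
  define v where "v = y - \<beta>"
  have vb: "inner v \<beta> = 0" using assms(2) unfolding tplane_def v_def by simp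
  define u where "u = 2 *\<^sub>R \<beta> + v"
  have uy: "\<beta> + y = u" unfolding u_def v_def by (simp add: scaleR_2)
  have ub: "inner u \<beta> = 2" unfolding u_def using vb bb by (simp add: inner_add_left)
  have uu: "norm u ^ 2 = 4 + norm v ^ 2" unfolding u_def power2_norm_eq_inner
    using vb bb by (simp add: inner_add_left inner_add_right inner_commute)
  have upos: "norm u ^ 2 > 0" using uu by (smt (verit) zero_le_power2)
  have "z = (4 / norm u ^ 2) *\<^sub>R u - \<beta>" using assms(3) by (simp add: stereo_def uy)
  then have "inner z \<beta> = (4 / norm u ^ 2) * 2 - 1" using ub bb by (simp add: inner_diff_left)
  then have "1 + inner z \<beta> = 8 / (4 + norm v ^ 2)" using uu by simp
  then have "(1 + inner z \<beta>) * norm v ^ 2 = 8 * (norm v ^ 2 / (4 + norm v ^ 2))" by simp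
  also have "\<dots> \<le> 8 * 1" by (intro mult_left_mono) (use zero_le_power2[of "norm v"] in \<open>simp_all add: divide_le_eq_1 add_pos_nonneg\<close>)
  finally show ?thesis unfolding v_def by simp
qed

lemma bound_g:
  assumes "\<beta> \<in> S2" "y \<in> tplane \<beta>" "lam \<ge> 0"
  shows "norm (stereo \<beta> (Some (\<beta> + lam *\<^sub>R (y - \<beta>))) - \<beta>) \<le> lam * norm (y - \<beta>) + lam^2 * norm (y - \<beta>)^2 / 2"
proof -
  have bb: "inner \<beta> \<beta> = 1" using S2_inner assms by auto
  have nb: "norm \<beta> = 1" using S2_norm assms by auto
  define v where "v = y - \<beta>"
  have vb: "inner v \<beta> = 0" using assms(2) unfolding tplane_def v_def by simp
  define u where "u = 2 *\<^sub>R \<beta> + lam *\<^sub>R v"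
  have uy: "\<beta> + (\<beta> + lam *\<^sub>R v) = u" unfolding u_def by (simp add: scaleR_2)
  define s where "s = 4 + lam^2 * norm v ^ 2"
  have uu: "norm u ^ 2 = s" unfolding s_def u_def power2_norm_eq_inner
    using vb bb by (simp add: inner_add_left inner_add_right inner_commute power2_eq_square)
  have s4: "s \<ge> 4" unfolding s_def by simp
  have e: "stereo \<beta> (Some (\<beta> + lam *\<^sub>R v)) = (4 / norm u ^ 2) *\<^sub>R u - \<beta>"
    by (simp add: stereo_def uy)
  have "stereo \<beta> (Some (\<beta> + lam *\<^sub>R v)) - \<beta> = (4 / s) *\<^sub>R u - \<beta> - \<beta>"
    using e uu by simp
  also have "\<dots> = (4 / s) *\<^sub>R u - 2 *\<^sub>R \<beta>" by (simp add: scaleR_2)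
  also have "\<dots> = (- 2 * lam^2 * norm v ^ 2 / s) *\<^sub>R \<beta> + (4 * lam / s) *\<^sub>R v"
  proof -
    have "(4 / s) *\<^sub>R u - 2 *\<^sub>R \<beta> = (8 / s - 2) *\<^sub>R \<beta> + (4 * lam / s) *\<^sub>R v"
      unfolding u_def by (simp add: scaleR_add_right algebra_simps)
    moreover have "8 / s - 2 = - 2 * lam^2 * norm v ^ 2 / s"
    proof -
      have h: "8 - 2 * s = - 2 * lam^2 * norm v ^ 2" unfolding s_def by simp
      have "8 / s - 2 = (8 - 2 * s) / s" using s4 by (simp add: field_simps)
      then show ?thesis using h by simp
    qed
    ultimately show ?thesis by simp
  qed
  also have "norm \<dots> \<le> 2 * lam^2 * norm v ^ 2 / s + 4 * lam * norm v / s"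
    using norm_triangle_ineq[of "(- 2 * lam^2 * norm v ^ 2 / s) *\<^sub>R \<beta>" "(4 * lam / s) *\<^sub>R v"]
      s4 assms(3) nb by (simp add: abs_mult)
  also have "\<dots> \<le> 2 * lam^2 * norm v ^ 2 / 4 + 4 * lam * norm v / 4"
    using s4 assms(3) by (intro add_mono divide_left_mono) auto
  finally show ?thesis unfolding v_def by simp
qed

lemma key_bound:
  assumes "\<beta> \<in> S2" "z \<in> S2" "z \<noteq> - \<beta>" "c > 0" "c \<le> 1 + inner z \<beta>"
    and "0 \<le> lam" "lam \<le> \<delta>" "\<delta> \<le> 1"
  shows "norm (gmap \<beta> lam z - \<beta>) \<le> \<delta> * ((8/c + 1) + (8/c + 1)^2)"
proof -
  define N where "N = 8/c + 1"
  have N0: "N \<ge> 0" unfolding N_def using assms(4) by simp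
  have d0: "\<delta> \<ge> 0" using assms by simp
  show ?thesis
  proof (cases "lam = 0")
    case True
    then have "gmap \<beta> lam z = \<beta>" using assms(3) by (simp add: gmap_def)
    then show ?thesis using d0 N0 unfolding N_def[symmetric] by simp
  next
    case False
    obtain y where y: "y \<in> tplane \<beta>" "stereo \<beta> (Some y) = z"
      "inv_into (tplane_ext \<beta>) (stereo \<beta>) z = Some y" using inv_pre[OF assms(1-3)] by blast
    have g: "gmap \<beta> lam z = stereo \<beta> (Some (\<beta> + lam *\<^sub>R (y - \<beta>)))"
      using False y(3) by (simp add: gmap_def dil_def)
    have bv: "(1 + inner z \<beta>) * norm (y - \<beta>) ^ 2 \<le> 8" using bound_v[OF assms(1) y(1,2)] .
    have "c * norm (y - \<beta>) ^ 2 \<le> (1 + inner z \<beta>) * norm (y - \<beta>) ^ 2"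
      using assms(5) by (intro mult_right_mono) auto
    then have "c * norm (y - \<beta>) ^ 2 \<le> 8" using bv by linarith
    then have v2: "norm (y - \<beta>) ^ 2 \<le> 8 / c" using assms(4) by (simp add: field_simps)
    have v1: "norm (y - \<beta>) \<le> N"
    proof (cases "norm (y - \<beta>) \<le> 1")
      case True then show ?thesis unfolding N_def using assms(4) by (smt (verit) divide_pos_pos)
    next
      case False
      then have "1 * norm (y - \<beta>) \<le> norm (y - \<beta>) * norm (y - \<beta>)" by (intro mult_right_mono) simp_all
      then have "norm (y - \<beta>) \<le> norm (y - \<beta>) ^ 2" by (simp add: power2_eq_square)
      then show ?thesis using v2 unfolding N_def by simp
    qed
    have v2': "norm (y - \<beta>) ^ 2 \<le> N^2" using v1 by (simp add: power_mono)
    have "lam * lam \<le> \<delta> * 1" using assms(6-8) by (intro mult_mono) auto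
    then have l2: "lam^2 \<le> \<delta>" by (simp add: power2_eq_square)
    have "norm (gmap \<beta> lam z - \<beta>) \<le> lam * norm (y - \<beta>) + lam^2 * norm (y - \<beta>)^2 / 2"
      using g bound_g[OF assms(1) y(1) assms(6)] by simp
    also have "\<dots> \<le> \<delta> * N + \<delta> * N^2"
    proof -
      have "lam * norm (y - \<beta>) \<le> \<delta> * N" using v1 assms(6,7) by (intro mult_mono) auto
      moreover have "lam^2 * norm (y - \<beta>)^2 \<le> \<delta> * N^2" using v2' l2 d0 by (intro mult_mono) auto
      moreover have "0 \<le> lam^2 * norm (y - \<beta>)^2" by simp
      ultimately show ?thesis by linarith
    qed
    finally show ?thesis unfolding N_def[symmetric] by (simp add: algebra_simps)
  qed
qed

theorem lemma3p6:
  fixes K L :: "R3 set" and \<epsilon> :: real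
  assumes "compact K" "K \<subseteq> S2" "compact L" "L \<subseteq> S2"
    and "\<forall>\<beta>\<in>K. \<forall>z\<in>L. z \<noteq> - \<beta>"
    and "\<epsilon> > 0"
  shows "\<exists>\<delta>. 0 < \<delta> \<and> \<delta> < 1 \<and>
    (\<forall>lam\<in>{0..\<delta>}. \<forall>\<beta>\<in>K. \<forall>z\<in>L. norm (gmap \<beta> lam z - \<beta>) < \<epsilon>)"
proof (cases "K \<times> L = {}")
  case True
  then show ?thesis by (intro exI[of _ "1/2"]) auto
next
  case False
  have cpt: "compact (K \<times> L)" using assms(1,3) by (rule compact_Times)
  have cont: "continuous_on (K \<times> L) (\<lambda>p. 1 + inner (snd p) (fst p))"
    by (intro continuous_intros)
  obtain p0 where p0: "p0 \<in> K \<times> L" "\<forall>p \<in> K \<times> L. 1 + inner (snd p0) (fst p0) \<le> 1 + inner (snd p) (fst p)"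
    using continuous_attains_inf[OF cpt False cont] by blast
  define c where "c = 1 + inner (snd p0) (fst p0)"
  have c0: "c > 0" unfolding c_def using p0(1) assms(2,4,5) by (intro pos_a) auto
  have cle: "\<And>\<beta> z. \<beta> \<in> K \<Longrightarrow> z \<in> L \<Longrightarrow> c \<le> 1 + inner z \<beta>"
    using p0(2) unfolding c_def by force
  define N where "N = (8/c + 1) + (8/c + 1)^2"
  have N0: "N > 0" unfolding N_def using c0 by (smt (verit) divide_pos_pos zero_le_power2)
  define \<delta> where "\<delta> = min (1/2) (\<epsilon> / (2 * N))"
  have d0: "\<delta> > 0" unfolding \<delta>_def using N0 assms(6) by simp
  have d1: "\<delta> < 1" "\<delta> \<le> 1" unfolding \<delta>_def by auto
  have dN: "\<delta> * N < \<epsilon>"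
  proof -
    have "\<delta> * N \<le> (\<epsilon> / (2 * N)) * N" unfolding \<delta>_def using N0 by (intro mult_right_mono) auto
    also have "\<dots> = \<epsilon> / 2" using N0 by simp
    finally show ?thesis using assms(6) by simp
  qed
  show ?thesis
  proof (intro exI[of _ \<delta>] conjI ballI d0 d1)
    fix lam \<beta> z assume lam: "lam \<in> {0..\<delta>}" and b: "\<beta> \<in> K" and z: "z \<in> L"
    have "norm (gmap \<beta> lam z - \<beta>) \<le> \<delta> * N" unfolding N_def
    proof (rule key_bound)
      show "\<beta> \<in> S2" using b assms(2) by blast
      show "z \<in> S2" using z assms(4) by blast
      show "z \<noteq> - \<beta>" using b z assms(5) by blast
      show "c > 0" by (rule c0)
      show "c \<le> 1 + inner z \<beta>" by (rule cle[OF b z])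
      show "0 \<le> lam" "lam \<le> \<delta>" using lam by auto
      show "\<delta> \<le> 1" by (rule d1(2))
    qed
    then show "norm (gmap \<beta> lam z - \<beta>) < \<epsilon>" using dN by simp
  qed
qed

end
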